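(* For every $n \in \mathbb{N}$ and all integers $h, t$ with $0 \le h \le 4$ and $1 \le t \le F_n$: (i) $a_{5(F_{n+1}-1)+hF_n+t+1} = 5F_{n+2} - 4 + hF_{n+1} + \lfloor (F_{n+1}+1+t)\varphi \rfloor - \lfloor (F_{n+1}+1)\varphi \rfloor$; (ii) $b_{5(F_{n+1}-1)+hF_n+t+1} = 5F_{n+3} + hF_{n+2} - 3 + t + \lfloor (F_{n+1}+1+t)\varphi \rfloor - \lfloor (F_{n+1}+1)\varphi \rfloor$, where $\varphi = \frac{1+\sqrt{5}}{2}$.
   Context: Fibonacci numbers: $F_1 = F_2 = 1$, $F_{i+2} = F_{i+1} + F_i$. Let $\sigma$ be the substitution on finite sequences over $\{1,2\}$ replacing each entry $1$ by $2$ and each entry $2$ by $2,1$. Let $C_{1,1} = (1)$, $C_{i+1,1} = \sigma(C_{i,1})$. For $i \in \mathbb{N}$ let $C_i$ be the concatenation of five copies of $C_{i,1}$. Let $(c_n)_{n \in \mathbb{N}}$ be the infinite sequence obtained by concatenating $C_1, C_2, C_3, \dots$ in order, and let $d_n = c_n + 1$. Define $a_1 = 6$, $a_n = 6 + \sum_{i=1}^{n-1} c_i$, and $b_1 = 12$, $b_n = 12 + \sum_{i=1}^{n-1} d_i$ for $n \in \mathbb{N}$. *)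

theory Defs
  imports Complex_Main "HOL-Number_Theory.Fib"
begin

text \<open>Fibonacci numbers: the library fib has fib 1 = fib 2 = 1, matching F_1 = F_2 = 1.\<close>

definition sigma :: "nat list \<Rightarrow> nat list" where
  "sigma xs = concat (map (\<lambda>x. if x = 1 then [2] else [2, 1]) xs)"

definition Cone :: "nat \<Rightarrow> nat list" where
  "Cone i = (sigma ^^ (i - 1)) [1]"

definition Cblk :: "nat \<Rightarrow> nat list" where
  "Cblk i = concat (replicate 5 (Cone i))"

text \<open>c_n (1-indexed): n-th entry of C_1 C_2 C_3 ...; the prefix C_1 ... C_n has length >= n.\<close>
definition cseq :: "nat \<Rightarrow> nat" where
  "cseq n = (concat (map Cblk [1..<n+1])) ! (n - 1)"

definition dseq :: "nat \<Rightarrow> nat" where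
  "dseq n = cseq n + 1"

definition aseq :: "nat \<Rightarrow> int" where
  "aseq n = 6 + (\<Sum>i\<in>{1..<n}. int (cseq i))"

definition bseq :: "nat \<Rightarrow> int" where
  "bseq n = 12 + (\<Sum>i\<in>{1..<n}. int (dseq i))"

definition phi :: real where
  "phi = (1 + sqrt 5) / 2"

end

theory Submission
  imports Defs
begin

lemma five_dvd_sq: "(5::nat) dvd k^2 \<Longrightarrow> 5 dvd k"
proof -
  assume a: "(5::nat) dvd k^2"
  have "(k mod 5)^2 mod 5 = k^2 mod 5" by (simp add: power_mod)
  hence b: "(k mod 5)^2 mod 5 = 0" using a by simp
  have "k mod 5 < 5" by simp
  hence "k mod 5 = 0 \<or> k mod 5 = 1 \<or> k mod 5 = 2 \<or> k mod 5 = 3 \<or> k mod 5 = 4" by linarith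
  hence "k mod 5 = 0" using b by (auto simp: power2_eq_square)
  thus ?thesis by presburger
qed

lemma five_sq_desc: "\<forall>k::nat. 5 * n^2 = k^2 \<longrightarrow> n = 0"
proof (induction n rule: less_induct)
  case (less n)
  show ?case
  proof (intro allI impI)
    fix k :: nat assume h: "5 * n^2 = k^2"
    have "(5::nat) dvd k^2" unfolding h[symmetric] by simp
    hence "(5::nat) dvd k" by (rule five_dvd_sq)
    then obtain j where j: "k = 5 * j" by blast
    have h2: "n^2 = 5 * j^2" using h j by (simp add: power2_eq_square)
    have "(5::nat) dvd n^2" using h2 by simp
    hence "(5::nat) dvd n" by (rule five_dvd_sq)
    then obtain i where i: "n = 5 * i" by blast
    have h3: "5 * i^2 = j^2" using h2 i by (simp add: power2_eq_square)
    show "n = 0"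
    proof (rule ccontr)
      assume "n \<noteq> 0"
      hence "i < n" using i by simp
      hence "i = 0" using less.IH[rule_format, OF _ h3] by simp
      thus False using i \<open>n \<noteq> 0\<close> by simp
    qed
  qed
qed

lemma sqrt5_sq: "sqrt 5 * sqrt 5 = (5::real)" by simp

lemma phi_sq: "phi * phi = phi + 1"
  unfolding phi_def by (simp add: field_simps)

lemma phi_bounds: "1.5 < phi" "phi < 2"
proof -
  have "2 < sqrt (5::real)" by (rule real_less_rsqrt) auto
  moreover have "sqrt (5::real) < 3" by (rule real_less_lsqrt) auto
  ultimately show "1.5 < phi" "phi < 2" unfolding phi_def by auto
qed

lemma not_int_mult_phi:
  fixes n m :: int assumes "n \<ge> 1" shows "real_of_int n * phi \<noteq> real_of_int m"
proof
  assume h: "real_of_int n * phi = real_of_int m"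
  hence "real_of_int n * sqrt 5 = real_of_int (2*m - n)" unfolding phi_def by (simp add: field_simps)
  hence "(real_of_int n * sqrt 5)^2 = (real_of_int (2*m - n))^2" by simp
  hence "real_of_int (5 * n^2) = real_of_int ((2*m-n)^2)" by (simp add: power_mult_distrib)
  hence "5 * n^2 = (2*m-n)^2" by linarith
  hence "int (5 * (nat n)^2) = int ((nat \<bar>2*m-n\<bar>)^2)" using assms by simp
  hence "5 * (nat n)^2 = (nat \<bar>2*m-n\<bar>)^2" by linarith
  hence "nat n = 0" using five_sq_desc by blast
  thus False using assms by simp
qed

definition G :: "int \<Rightarrow> int" where "G x = \<lfloor>real_of_int x * phi\<rfloor>"

lemma G_G:
  fixes n :: int assumes "n \<ge> 1"
  shows "G (G n) = G n + n - 1" "G (G n + 1) = G n + n + 1"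
proof -
  define f where "f = real_of_int n * phi - G n"
  have f0: "0 < f" using not_int_mult_phi[OF assms, of "G n"] unfolding f_def G_def
    by (smt (verit) of_int_floor_le)
  have f1: "f < 1" unfolding f_def G_def by linarith
  have e: "real_of_int (G n) * phi = real_of_int (G n) + real_of_int n + f * (1 - phi)"
  proof -
    have "real_of_int (G n) * phi = (real_of_int n * phi - f) * phi" unfolding f_def by simp
    also have "\<dots> = real_of_int n * (phi*phi) - f * phi" by (simp add: algebra_simps)
    also have "\<dots> = real_of_int n * phi + real_of_int n - f * phi" by (simp add: phi_sq algebra_simps)
    finally show ?thesis unfolding f_def by (simp add: algebra_simps)
  qed
  have p1: "f * (phi - 1) > 0" using f0 phi_bounds by simp
  have p2: "f * (phi - 1) < 1"
  proof -
    have "f * (phi - 1) \<le> (phi - 1)" using mult_right_mono[of f 1 "phi-1"] f1 phi_bounds by simp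
    thus ?thesis using phi_bounds by linarith
  qed
  have p3: "(1 - f) * (phi - 1) \<ge> 0" using f1 phi_bounds by simp
  have p4: "(1 - f) * (phi - 1) < 1"
  proof -
    have "(1-f) * (phi - 1) \<le> (phi - 1)" using mult_right_mono[of "1-f" 1 "phi-1"] f0 phi_bounds by simp
    thus ?thesis using phi_bounds by linarith
  qed
  show "G (G n) = G n + n - 1" unfolding G_def[of "G n"]
    using e p1 p2 by (intro floor_unique) (auto simp: algebra_simps)
  have e2: "real_of_int (G n + 1) * phi = real_of_int (G n + n + 1) + (1 - f) * (phi - 1)"
    using e by (simp add: algebra_simps)
  show "G (G n + 1) = G n + n + 1" unfolding G_def[of "G n + 1"] e2
    using p3 p4 by (intro floor_unique) auto
qed


lemma sigma_append[simp]: "sigma (xs @ ys) = sigma xs @ sigma ys"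
  unfolding sigma_def by simp

lemma sigma_Nil[simp]: "sigma [] = []" unfolding sigma_def by simp

lemma sigma_Cons[simp]: "sigma (x # xs) = (if x = 1 then [2] else [2,1]) @ sigma xs"
  unfolding sigma_def by simp

lemma sigma_set: "set (sigma xs) \<subseteq> {1,2}"
  by (induction xs) auto

lemma sigma_len: "set xs \<subseteq> {1,2} \<Longrightarrow> length (sigma xs) = sum_list xs"
  by (induction xs) auto

lemma sigma_cover:
  "set xs \<subseteq> {1,2} \<Longrightarrow> t \<le> length (sigma xs) \<Longrightarrow>
   \<exists>k. (k \<le> length xs \<and> t = sum_list (take k xs) \<and> sum_list (take t (sigma xs)) = k + sum_list (take k xs))
     \<or> (k < length xs \<and> t = sum_list (take k xs) + 1 \<and> sum_list (take t (sigma xs)) = k + sum_list (take k xs) + 2)"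
proof (induction xs arbitrary: t)
  case Nil
  then show ?case by auto
next
  case (Cons x xs)
  show ?case
  proof (cases "t = 0")
    case True
    then show ?thesis by (intro exI[of _ 0]) auto
  next
    case False
    show ?thesis
    proof (cases "x = 1")
      case True
      have "t - 1 \<le> length (sigma xs)" using Cons.prems True by simp
      then obtain k where k: "(k \<le> length xs \<and> t - 1 = sum_list (take k xs) \<and> sum_list (take (t-1) (sigma xs)) = k + sum_list (take k xs))
     \<or> (k < length xs \<and> t - 1 = sum_list (take k xs) + 1 \<and> sum_list (take (t-1) (sigma xs)) = k + sum_list (take k xs) + 2)"
        using Cons.IH Cons.prems by auto
      have tk: "take t (sigma (x # xs)) = 2 # take (t-1) (sigma xs)" using True False
        by (cases t) auto
      show ?thesis using k tk True False by (intro exI[of _ "Suc k"]) auto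
    next
      case x2: False
      hence x2': "x = 2" using Cons.prems by auto
      show ?thesis
      proof (cases "t = 1")
        case True
        then show ?thesis using x2' by (intro exI[of _ 0]) auto
      next
        case t2: False
        have "t - 2 \<le> length (sigma xs)" using Cons.prems x2' by simp
        then obtain k where k: "(k \<le> length xs \<and> t - 2 = sum_list (take k xs) \<and> sum_list (take (t-2) (sigma xs)) = k + sum_list (take k xs))
       \<or> (k < length xs \<and> t - 2 = sum_list (take k xs) + 1 \<and> sum_list (take (t-2) (sigma xs)) = k + sum_list (take k xs) + 2)"
          using Cons.IH Cons.prems by auto
        have tk: "take t (sigma (x # xs)) = 2 # 1 # take (t-2) (sigma xs)" using x2' False t2
          by (cases t; cases "t - 1") auto
        show ?thesis using k tk x2' False t2 by (intro exI[of _ "Suc k"]) auto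
      qed
    qed
  qed
qed

definition Q :: "nat list \<Rightarrow> bool" where
  "Q xs = (\<forall>t\<le>length xs. int (sum_list (take t xs)) = G (int t + 1) - 1)"

lemma Q_sigma:
  assumes s: "set xs \<subseteq> {1,2}" and q: "Q xs"
  shows "Q (sigma xs)"
  unfolding Q_def
proof (intro allI impI)
  fix t assume t: "t \<le> length (sigma xs)"
  from sigma_cover[OF s t] obtain k where k:
    "(k \<le> length xs \<and> t = sum_list (take k xs) \<and> sum_list (take t (sigma xs)) = k + sum_list (take k xs))
     \<or> (k < length xs \<and> t = sum_list (take k xs) + 1 \<and> sum_list (take t (sigma xs)) = k + sum_list (take k xs) + 2)"
    by blast
  have k1: "int k + 1 \<ge> 1" by simp
  show "int (sum_list (take t (sigma xs))) = G (int t + 1) - 1"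
  proof (cases "k \<le> length xs \<and> t = sum_list (take k xs) \<and> sum_list (take t (sigma xs)) = k + sum_list (take k xs)")
    case True
    have qk: "int (sum_list (take k xs)) = G (int k + 1) - 1" using q True unfolding Q_def by blast
    have e1: "int t + 1 = G (int k + 1)" using True qk by simp
    have "sum_list (take t (sigma xs)) = k + sum_list (take k xs)" using True by blast
    hence e2: "int (sum_list (take t (sigma xs))) = int k + int (sum_list (take k xs))" by simp
    show ?thesis unfolding e1 using e2 qk G_G(1)[OF k1] by linarith
  next
    case False
    hence F: "k < length xs \<and> t = sum_list (take k xs) + 1 \<and> sum_list (take t (sigma xs)) = k + sum_list (take k xs) + 2"
      using k by blast
    have qk: "int (sum_list (take k xs)) = G (int k + 1) - 1" using q F unfolding Q_def by auto
    have e1: "int t + 1 = G (int k + 1) + 1" using F qk by simp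
    have "sum_list (take t (sigma xs)) = k + sum_list (take k xs) + 2" using F by blast
    hence e2: "int (sum_list (take t (sigma xs))) = int k + int (sum_list (take k xs)) + 2" by simp
    show ?thesis unfolding e1 using e2 qk G_G(2)[OF k1] by linarith
  qed
qed

lemma Cone_Suc: "i \<ge> 1 \<Longrightarrow> Cone (Suc i) = sigma (Cone i)"
  unfolding Cone_def by (cases i) auto

lemma Cone_1: "Cone 1 = [1]" unfolding Cone_def by simp
lemma Cone_2: "Cone 2 = [2]" unfolding Cone_def by (simp add: numeral_2_eq_2)

lemma Cone_set: "set (Cone i) \<subseteq> {1,2}"
proof (cases i)
  case 0 then show ?thesis unfolding Cone_def by simp
next
  case (Suc j)
  then show ?thesis
  proof (cases j)
    case 0 then show ?thesis using Suc Cone_1 by simp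
  next
    case (Suc j') then show ?thesis using \<open>i = Suc j\<close> Cone_Suc[of j] sigma_set by simp
  qed
qed

lemma Cone_rec: "n \<ge> 1 \<Longrightarrow> Cone (n + 2) = Cone (n + 1) @ Cone n"
proof (induction n rule: dec_induct)
  case base
  show ?case unfolding Cone_def by (simp add: numeral_3_eq_3 numeral_2_eq_2)
next
  case (step n)
  have "Cone (Suc n + 2) = sigma (Cone (n + 2))" using Cone_Suc[of "n+2"] by simp
  also have "\<dots> = sigma (Cone (n+1)) @ sigma (Cone n)" using step by simp
  also have "\<dots> = Cone (Suc n + 1) @ Cone (Suc n)" using Cone_Suc[of "n+1"] Cone_Suc[of n] step by simp
  finally show ?case .
qed

lemma Cone_len_sum: "n \<ge> 1 \<Longrightarrow> length (Cone n) = fib n \<and> sum_list (Cone n) = fib (n+1)"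
proof (induction n rule: nat_less_induct)
  case (1 n)
  show ?case
  proof (cases "n \<le> 2")
    case True
    then have "n = 1 \<or> n = 2" using 1 by auto
    then show ?thesis using Cone_1 Cone_2 by (auto simp: numeral_3_eq_3)
  next
    case False
    define m where "m = n - 2"
    have m: "n = m + 2" "m \<ge> 1" using False by (simp_all add: m_def)
    have a: "length (Cone m) = fib m \<and> sum_list (Cone m) = fib (m+1)" using 1 m by auto
    have b: "length (Cone (m+1)) = fib (m+1) \<and> sum_list (Cone (m+1)) = fib (m+2)" using 1 m by auto
    have c: "Cone n = Cone (m+1) @ Cone m" using Cone_rec[OF m(2)] m(1) by simp
    have f1: "fib n = fib (m+1) + fib m" using fib_plus_2[of m] m(1) by simp
    have f2: "fib (n+1) = fib (m+2) + fib (m+1)" using fib_plus_2[of "m+1"] m(1) by (simp add: add_ac)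
    show ?thesis unfolding c f1 f2 using a b by simp
  qed
qed

lemma G_1: "G 1 = 1" unfolding G_def using phi_bounds by (intro floor_unique) auto
lemma G_2: "G 2 = 3"
proof -
  have "2 < sqrt (5::real)" by (rule real_less_rsqrt) auto
  moreover have "sqrt (5::real) < 3" by (rule real_less_lsqrt) auto
  ultimately show ?thesis unfolding G_def phi_def by (intro floor_unique) auto
qed

lemma Q_Cone: "m \<ge> 2 \<Longrightarrow> Q (Cone m)"
proof (induction m rule: dec_induct)
  case base
  have "t \<le> 1 \<Longrightarrow> int (sum_list (take t [2])) = G (int t + 1) - 1" for t
    using G_1 G_2 by (cases t) auto
  then show ?case unfolding Q_def Cone_2 by simp
next
  case (step m)
  then show ?case using Q_sigma[OF Cone_set] Cone_Suc[of m] by simp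
qed

lemma Cone_prefix:
  assumes "n \<ge> 1" "t \<le> fib n"
  shows "int (sum_list (take t (Cone n))) = G (int (fib (n+1)) + 1 + int t) - G (int (fib (n+1)) + 1)"
proof -
  have q: "Q (Cone (n+2))" using Q_Cone by simp
  have l1: "length (Cone (n+1)) = fib (n+1)" "sum_list (Cone (n+1)) = fib (n+2)"
    using Cone_len_sum[of "n+1"] by auto
  have l2: "length (Cone (n+2)) = fib (n+2)" using Cone_len_sum[of "n+2"] by auto
  have "fib (n+1) + t \<le> fib (n+2)" using assms by (simp add: fib_plus_2)
  hence le1: "fib (n+1) + t \<le> length (Cone (n+2))" using l2 by simp
  have qq: "\<And>t. t \<le> length (Cone (n+2)) \<Longrightarrow> int (sum_list (take t (Cone (n+2)))) = G (int t + 1) - 1"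
    using q unfolding Q_def by blast
  have A: "int (sum_list (take (fib (n+1) + t) (Cone (n+2)))) = G (int (fib (n+1) + t) + 1) - 1"
    by (rule qq[OF le1])
  have le2: "fib (n+1) \<le> length (Cone (n+2))" using le1 by simp
  have B: "int (sum_list (take (fib (n+1)) (Cone (n+2)))) = G (int (fib (n+1)) + 1) - 1"
    by (rule qq[OF le2])
  have C: "take (fib (n+1) + t) (Cone (n+2)) = Cone (n+1) @ take t (Cone n)"
    using Cone_rec[OF assms(1)] l1 by simp
  have D: "take (fib (n+1)) (Cone (n+2)) = Cone (n+1)"
    using Cone_rec[OF assms(1)] l1 by simp
  show ?thesis using A B C D by (simp add: add_ac)
qed


lemma len_concat_rep: "length (concat (replicate k xs)) = k * length xs"
  by (induction k) auto
lemma sum_concat_rep: "sum_list (concat (replicate k xs)) = k * sum_list xs"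
  by (induction k) auto

lemma Cblk_len_sum: "n \<ge> 1 \<Longrightarrow> length (Cblk n) = 5 * fib n \<and> sum_list (Cblk n) = 5 * fib (n+1)"
  unfolding Cblk_def len_concat_rep sum_concat_rep using Cone_len_sum by simp

definition Pre :: "nat \<Rightarrow> nat list" where "Pre k = concat (map Cblk [1..<k+1])"

lemma Pre_Suc: "Pre (Suc k) = Pre k @ Cblk (Suc k)"
  unfolding Pre_def by simp

lemma Pre_len_sum: "length (Pre k) + 5 = 5 * fib (k+2) \<and> sum_list (Pre k) + 10 = 5 * fib (k+3)"
proof (induction k)
  case 0
  then show ?case unfolding Pre_def by (simp add: numeral_3_eq_3 numeral_2_eq_2)
next
  case (Suc k)
  have c: "length (Cblk (Suc k)) = 5 * fib (Suc k) \<and> sum_list (Cblk (Suc k)) = 5 * fib (Suc k + 1)"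
    using Cblk_len_sum[of "Suc k"] by simp
  have f1: "fib (Suc k + 2) = fib (k+2) + fib (Suc k)" using fib_plus_2[of "Suc k"] by simp
  have f2: "fib (Suc k + 3) = fib (k+3) + fib (Suc k + 1)" using fib_plus_2[of "Suc k + 1"]
    by (simp add: numeral_3_eq_3)
  have l: "length (Pre (Suc k)) = length (Pre k) + length (Cblk (Suc k))" unfolding Pre_Suc by simp
  have m: "sum_list (Pre (Suc k)) = sum_list (Pre k) + sum_list (Cblk (Suc k))" unfolding Pre_Suc by simp
  have g1: "fib (Suc k + 2) = fib (k+2) + fib (Suc k)" by (rule f1)
  have g2: "fib (Suc k + 3) = fib (k+3) + fib (Suc k + 1)" by (rule f2)
  show ?case using Suc c l m by (simp only: g1 g2 add_mult_distrib2) linarith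
qed

lemma Pre_len_ge: "length (Pre k) \<ge> k"
proof (induction k)
  case 0 then show ?case by (simp add: Pre_def)
next
  case (Suc k)
  have "length (Cblk (Suc k)) \<ge> 1" using Cblk_len_sum[of "Suc k"] fib_neq_0_nat[of "Suc k"] by simp
  then show ?case using Suc unfolding Pre_Suc by simp
qed

lemma Pre_prefix: "a \<le> b \<Longrightarrow> \<exists>r. Pre b = Pre a @ r"
proof (induction b rule: dec_induct)
  case base then show ?case by simp
next
  case (step b) then show ?case unfolding Pre_Suc by auto
qed

lemma cseq_Pre: assumes "1 \<le> i" "i \<le> length (Pre n)" shows "cseq i = Pre n ! (i - 1)"
proof -
  have cs: "cseq i = Pre i ! (i - 1)" unfolding cseq_def Pre_def by simp
  have li: "i - 1 < length (Pre i)" using Pre_len_ge[of i] assms by simp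
  show ?thesis
  proof (cases "i \<le> n")
    case True
    then obtain r where "Pre n = Pre i @ r" using Pre_prefix by blast
    then show ?thesis using cs li by (simp add: nth_append)
  next
    case False
    then obtain r where "Pre i = Pre n @ r" using Pre_prefix[of n i] by auto
    moreover have "i - 1 < length (Pre n)" using assms by simp
    ultimately show ?thesis using cs by (simp add: nth_append)
  qed
qed

lemma sum_nth_take: "m \<le> length xs \<Longrightarrow> (\<Sum>i\<in>{1..<m+1}. int (xs ! (i - 1))) = int (sum_list (take m xs))"
proof (induction m)
  case 0 then show ?case by simp
next
  case (Suc m)
  have "take (Suc m) xs = take m xs @ [xs ! m]" using Suc.prems by (simp add: take_Suc_conv_app_nth)
  then show ?case using Suc by simp
qed

lemma floor_G: "\<lfloor>real (x::nat) * phi\<rfloor> = G (int x)" unfolding G_def by simp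

theorem theorem4p4:
  fixes n h t :: nat
  assumes "n \<ge> 1" and "h \<le> 4" and "1 \<le> t" and "t \<le> fib n"
  shows "(aseq (5 * (fib (n + 1) - 1) + h * fib n + t + 1)
           = 5 * int (fib (n + 2)) - 4 + int h * int (fib (n + 1))
             + \<lfloor>real (fib (n + 1) + 1 + t) * phi\<rfloor> - \<lfloor>real (fib (n + 1) + 1) * phi\<rfloor>)
         \<and> (bseq (5 * (fib (n + 1) - 1) + h * fib n + t + 1)
           = 5 * int (fib (n + 3)) + int h * int (fib (n + 2)) - 3 + int t
             + \<lfloor>real (fib (n + 1) + 1 + t) * phi\<rfloor> - \<lfloor>real (fib (n + 1) + 1) * phi\<rfloor>)"
proof -
  define M where "M = 5 * (fib (n + 1) - 1) + h * fib n + t"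
  define P where "P = int (sum_list (take t (Cone n)))"
  obtain n' where n': "n = Suc n'" using assms(1) by (cases n) auto
  have PL: "length (Pre n') + 5 = 5 * fib (n+1)" "int (sum_list (Pre n')) + 10 = 5 * int (fib (n+2))"
    using Pre_len_sum[of n'] n' by (simp_all add: numeral_3_eq_3 numeral_2_eq_2)
  have fpos: "fib (n+1) \<ge> 1" using fib_neq_0_nat[of "n+1"] by simp
  have lPre: "length (Pre n') = 5 * (fib (n + 1) - 1)" using PL(1) fpos by simp
  have CL: "length (Cone n) = fib n" "sum_list (Cone n) = fib (n+1)" using Cone_len_sum assms(1) by auto
  have r: "replicate 5 (Cone n) = replicate h (Cone n) @ Cone n # replicate (4 - h) (Cone n)"
  proof -
    have "(5::nat) = h + Suc (4 - h)" using assms(2) by simp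
    hence "replicate 5 (Cone n) = replicate (h + Suc (4 - h)) (Cone n)"
      by (rule arg_cong[where f="\<lambda>k. replicate k (Cone n)"])
    also have "\<dots> = replicate h (Cone n) @ replicate (Suc (4 - h)) (Cone n)" by (rule replicate_add)
    finally show ?thesis by simp
  qed
  have CB: "Cblk n = concat (replicate h (Cone n)) @ Cone n @ concat (replicate (4 - h) (Cone n))"
    unfolding Cblk_def r by simp
  have tk: "take (h * fib n + t) (Cblk n) = concat (replicate h (Cone n)) @ take t (Cone n)"
    unfolding CB using CL assms(4) by (simp add: len_concat_rep)
  have PreN: "Pre n = Pre n' @ Cblk n" using n' Pre_Suc by simp
  have tM: "take M (Pre n) = Pre n' @ take (h * fib n + t) (Cblk n)"
  proof -
    have "M - length (Pre n') = h * fib n + t" unfolding M_def lPre by simp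
    moreover have "length (Pre n') \<le> M" unfolding M_def lPre by simp
    ultimately show ?thesis unfolding PreN by simp
  qed
  have sM: "int (sum_list (take M (Pre n))) = int (sum_list (Pre n')) + int h * int (fib (n+1)) + P"
    unfolding tM tk P_def using CL by (simp add: sum_concat_rep)
  have lPreN: "length (Pre n) = length (Pre n') + 5 * fib n" using PreN Cblk_len_sum assms(1) by simp
  have Mle: "M \<le> length (Pre n)" unfolding lPreN M_def lPre using assms(2,4)
  proof -
    have "h * fib n + t \<le> 4 * fib n + fib n" using assms(2,4) by (intro add_mono mult_right_mono) auto
    thus "5 * (fib (n + 1) - 1) + h * fib n + t \<le> 5 * (fib (n + 1) - 1) + 5 * fib n" by simp
  qed
  have sumc: "(\<Sum>i\<in>{1..<M+1}. int (cseq i)) = int (sum_list (take M (Pre n)))"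
  proof -
    have "(\<Sum>i\<in>{1..<M+1}. int (cseq i)) = (\<Sum>i\<in>{1..<M+1}. int (Pre n ! (i - 1)))"
      using cseq_Pre Mle by (intro sum.cong) auto
    also have "\<dots> = int (sum_list (take M (Pre n)))" using sum_nth_take Mle by blast
    finally show ?thesis .
  qed
  have A: "aseq (M + 1) = 6 + int (sum_list (Pre n')) + int h * int (fib (n+1)) + P"
    unfolding aseq_def sumc sM by simp
  have sumd: "(\<Sum>i\<in>{1..<M+1}. int (dseq i)) = (\<Sum>i\<in>{1..<M+1}. int (cseq i)) + int M"
    unfolding dseq_def by (simp add: sum.distrib)
  have B: "bseq (M + 1) = 12 + int (sum_list (Pre n')) + int h * int (fib (n+1)) + P + int M"
    unfolding bseq_def sumd sumc sM by simp
  have PG: "P = G (int (fib (n+1)) + 1 + int t) - G (int (fib (n+1)) + 1)"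
    unfolding P_def using Cone_prefix assms(1,4) by blast
  have fl: "\<lfloor>real (fib (n + 1) + 1 + t) * phi\<rfloor> - \<lfloor>real (fib (n + 1) + 1) * phi\<rfloor> = P"
    unfolding PG floor_G by (simp add: add_ac)
  have F3: "int (fib (n+3)) = int (fib (n+2)) + int (fib (n+1))"
    using fib_plus_2[of "n+1"] by (simp add: numeral_3_eq_3 numeral_2_eq_2)
  have F2: "int (fib (n+2)) = int (fib (n+1)) + int (fib n)"
    using fib_plus_2[of n] by simp
  have Mi: "int M = 5 * int (fib (n+1)) - 5 + int h * int (fib n) + int t"
    unfolding M_def using fpos by (simp add: of_nat_diff)
  have e: "5 * (fib (n + 1) - 1) + h * fib n + t + 1 = M + 1" unfolding M_def by simp
  have hF: "int h * int (fib (n+2)) = int h * int (fib (n+1)) + int h * int (fib n)"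
    unfolding F2 by (simp add: algebra_simps)
  show ?thesis unfolding e
  proof
    show "aseq (M + 1) = 5 * int (fib (n + 2)) - 4 + int h * int (fib (n + 1))
             + \<lfloor>real (fib (n + 1) + 1 + t) * phi\<rfloor> - \<lfloor>real (fib (n + 1) + 1) * phi\<rfloor>"
      unfolding A using fl PL(2) by linarith
    show "bseq (M + 1) = 5 * int (fib (n + 3)) + int h * int (fib (n + 2)) - 3 + int t
             + \<lfloor>real (fib (n + 1) + 1 + t) * phi\<rfloor> - \<lfloor>real (fib (n + 1) + 1) * phi\<rfloor>"
      unfolding B using fl PL(2) F3 F2 Mi hF by linarith
  qed
qed

end
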